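(* Let $A=(a_{\ell,r})$ be an $n\times n$ flat matrix and $H=(h_{\ell,k})$ an $n\times n$ matrix whose entries all have absolute value $1$ and whose rows are pairwise orthogonal. For $r=1,\dots,n$ let $M_r$ be the $n\times n$ matrix with entries $(M_r)_{\ell,k}=\frac1{\sqrt n}a_{\ell,r}h_{\ell,k}$, i.e. $M_r=\frac1{\sqrt n}\operatorname{diag}(v_r)H$ where $v_r$ is the $r$-th column of $A$. Then $\{M_1,\dots,M_n\}$ is a complete system of mutually unbiased Hadamards if and only if every pair of distinct vertices of the vertex set $V_n$ is adjacent in $L(A)$ or in $L(H)$ (i.e. $L(A)$ and $L(H)$ together cover the complete graph on $V_n$).
   Context: A flat matrix is a complex matrix all of whose entries have absolute value $1$. For an $n\times n$ complex matrix $C$ with rows $c_1,\dots,c_n$, its L-graph $L(C)$ is the simple graph on the vertex set $V_n$ of all 2-element multisets $\{i,j\}$ with $1\le i\le j\le n$, in which distinct vertices $\{i,j\}$ and $\{k,l\}$ are adjacent iff $\langle c_i\circ c_j | c_k\circ c_l\rangle=0$; here $\circ$ is the entrywise product and $\langle x|y\rangle=\sum_t\overline{x_t}y_t$. A complex Hadamard matrix is a unitary $n\times n$ matrix all of whose entries have absolute value $1/\sqrt n$; two are mutually unbiased if $|\langle x|y\rangle|=1/\sqrt n$ for every column $x$ of one and column $y$ of the other; a complete system of mutually unbiased Hadamards is a set of $n$ pairwise mutually unbiased complex Hadamard $n\times n$ matrices. *)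

theory Defs
  imports Jordan_Normal_Form.Schur_Decomposition
begin

text \<open>Matrices are Jordan_Normal_Form matrices; indices are 0-based.\<close>

definition cinner :: "complex vec \<Rightarrow> complex vec \<Rightarrow> complex" where
  "cinner x y = (\<Sum>t<dim_vec x. cnj (x $ t) * y $ t)"

definition entrywise_prod :: "complex vec \<Rightarrow> complex vec \<Rightarrow> complex vec" where
  "entrywise_prod x y = vec (dim_vec x) (\<lambda>t. x $ t * y $ t)"

definition flat_mat :: "complex mat \<Rightarrow> bool" where
  "flat_mat C \<longleftrightarrow> (\<forall>i<dim_row C. \<forall>j<dim_col C. cmod (C $$ (i,j)) = 1)"

text \<open>Vertex set V_n: 2-element multisets {i,j}, represented by pairs (i,j) with i \<le> j < n.\<close>
definition Lverts :: "nat \<Rightarrow> (nat \<times> nat) set" where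
  "Lverts n = {(i,j). i \<le> j \<and> j < n}"

definition L_adj :: "complex mat \<Rightarrow> nat \<times> nat \<Rightarrow> nat \<times> nat \<Rightarrow> bool" where
  "L_adj C u v \<longleftrightarrow> u \<noteq> v \<and>
     cinner (entrywise_prod (row C (fst u)) (row C (snd u)))
            (entrywise_prod (row C (fst v)) (row C (snd v))) = 0"

definition complex_hadamard :: "nat \<Rightarrow> complex mat \<Rightarrow> bool" where
  "complex_hadamard n M \<longleftrightarrow> M \<in> carrier_mat n n \<and> mat_adjoint M * M = 1\<^sub>m n \<and>
     (\<forall>i<n. \<forall>j<n. cmod (M $$ (i,j)) = 1 / sqrt (real n))"

definition mutually_unbiased :: "nat \<Rightarrow> complex mat \<Rightarrow> complex mat \<Rightarrow> bool" where
  "mutually_unbiased n M M' \<longleftrightarrow>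
     (\<forall>k<n. \<forall>l<n. cmod (cinner (col M k) (col M' l)) = 1 / sqrt (real n))"

definition complete_MUH_system :: "nat \<Rightarrow> complex mat set \<Rightarrow> bool" where
  "complete_MUH_system n S \<longleftrightarrow> card S = n \<and> (\<forall>M\<in>S. complex_hadamard n M) \<and>
     (\<forall>M\<in>S. \<forall>M'\<in>S. M \<noteq> M' \<longrightarrow> mutually_unbiased n M M')"

end

theory Submission
  imports Defs
begin


lemma quad_expand:
  fixes x :: "nat \<Rightarrow> complex"
  shows "(sum x T * cnj (sum x T))^2 = (\<Sum>u'\<in>T. \<Sum>t'\<in>T. \<Sum>u\<in>T. \<Sum>t\<in>T. x t * cnj (x u) * x t' * cnj (x u'))"
  by (simp add: power2_eq_square sum_distrib_left sum_distrib_right mult.assoc)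

lemma four_moment:
  fixes X :: "'p \<Rightarrow> nat \<Rightarrow> complex" and Y :: "'q \<Rightarrow> nat \<Rightarrow> complex"
  shows "(\<Sum>p\<in>P. \<Sum>q\<in>Q. ((\<Sum>t\<in>T. X p t * Y q t) * cnj (\<Sum>t\<in>T. X p t * Y q t))^2)
   = (\<Sum>u'\<in>T. \<Sum>t'\<in>T. \<Sum>u\<in>T. \<Sum>t\<in>T. (\<Sum>p\<in>P. X p t * cnj (X p u) * X p t' * cnj (X p u')) *
        (\<Sum>q\<in>Q. Y q t * cnj (Y q u) * Y q t' * cnj (Y q u')))"
proof -
  have e: "\<And>p q. ((\<Sum>t\<in>T. X p t * Y q t) * cnj (\<Sum>t\<in>T. X p t * Y q t))^2 = 
     (\<Sum>u'\<in>T. \<Sum>t'\<in>T. \<Sum>u\<in>T. \<Sum>t\<in>T. (X p t * cnj (X p u) * X p t' * cnj (X p u')) *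
        (Y q t * cnj (Y q u) * Y q t' * cnj (Y q u')))"
    apply (subst quad_expand)
    apply (intro sum.cong refl)
    apply (simp add: mult_ac)
    done
  have "(\<Sum>p\<in>P. \<Sum>q\<in>Q. ((\<Sum>t\<in>T. X p t * Y q t) * cnj (\<Sum>t\<in>T. X p t * Y q t))^2)
    = (\<Sum>p\<in>P. \<Sum>q\<in>Q. \<Sum>u'\<in>T. \<Sum>t'\<in>T. \<Sum>u\<in>T. \<Sum>t\<in>T. (X p t * cnj (X p u) * X p t' * cnj (X p u')) *
        (Y q t * cnj (Y q u) * Y q t' * cnj (Y q u')))"
    by (simp only: e)
  also have "\<dots> = (\<Sum>u'\<in>T. \<Sum>t'\<in>T. \<Sum>u\<in>T. \<Sum>t\<in>T. \<Sum>q\<in>Q. \<Sum>p\<in>P. (X p t * cnj (X p u) * X p t' * cnj (X p u')) *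
        (Y q t * cnj (Y q u) * Y q t' * cnj (Y q u')))"
    apply (simp only: sum.swap[where A=Q])
    apply (simp only: sum.swap[where A=P])
    done
  also have "\<dots> = (\<Sum>u'\<in>T. \<Sum>t'\<in>T. \<Sum>u\<in>T. \<Sum>t\<in>T. (\<Sum>p\<in>P. X p t * cnj (X p u) * X p t' * cnj (X p u')) *
        (\<Sum>q\<in>Q. Y q t * cnj (Y q u) * Y q t' * cnj (Y q u')))"
    by (simp only: sum_product sum.swap[where A=Q])
  finally show ?thesis .
qed

lemma sq_expand:
  fixes x :: "nat \<Rightarrow> complex"
  shows "sum x T * cnj (sum x T) = (\<Sum>u\<in>T. \<Sum>t\<in>T. x t * cnj (x u))"
  by (simp add: sum_distrib_left sum_distrib_right)

lemma two_moment:
  fixes X :: "nat \<Rightarrow> complex" and Y :: "'q \<Rightarrow> nat \<Rightarrow> complex"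
  shows "(\<Sum>q\<in>Q. (\<Sum>t\<in>T. X t * Y q t) * cnj (\<Sum>t\<in>T. X t * Y q t))
   = (\<Sum>u\<in>T. \<Sum>t\<in>T. (X t * cnj (X u)) * (\<Sum>q\<in>Q. Y q t * cnj (Y q u)))"
proof -
  have "(\<Sum>q\<in>Q. (\<Sum>t\<in>T. X t * Y q t) * cnj (\<Sum>t\<in>T. X t * Y q t))
     = (\<Sum>q\<in>Q. \<Sum>u\<in>T. \<Sum>t\<in>T. (X t * cnj (X u)) * (Y q t * cnj (Y q u)))"
    apply (subst sq_expand)
    apply (intro sum.cong refl)
    apply (simp add: mult_ac)
    done
  also have "\<dots> = (\<Sum>u\<in>T. \<Sum>t\<in>T. \<Sum>q\<in>Q. (X t * cnj (X u)) * (Y q t * cnj (Y q u)))"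
    by (simp only: sum.swap[where A=Q])
  also have "\<dots> = (\<Sum>u\<in>T. \<Sum>t\<in>T. (X t * cnj (X u)) * (\<Sum>q\<in>Q. Y q t * cnj (Y q u)))"
    by (simp only: sum_distrib_left)
  finally show ?thesis .
qed



lemma sum_if_cond: "(\<Sum>x\<in>A. if P then f x else 0) = (if P then sum f A else (0::'a::comm_monoid_add))"
  by auto

definition diag4 :: "nat \<Rightarrow> nat \<Rightarrow> nat \<Rightarrow> nat \<Rightarrow> bool" where
  "diag4 u' t' u t \<longleftrightarrow> (t=u \<and> t'=u') \<or> (t=u' \<and> t'=u)"

lemma count_diag:
  "(\<Sum>u'<n. \<Sum>t'<n. \<Sum>u<n. \<Sum>t<n. (if diag4 u' t' u t then 1 else 0)) = 2 * real n ^ 2 - real n"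
proof -
  have i: "\<And>t u t' u'. (if (t=u \<and> t'=u') \<or> (t=u' \<and> t'=u) then 1 else 0 :: real) =
     (if t'=u' then (if t = u then 1 else 0) else 0) + (if t' = u then (if t=u' then 1 else 0) else 0)
      - (if t'=u' then (if u=u' then (if t = u then 1 else 0) else 0) else 0)"
    by auto
  show ?thesis unfolding diag4_def i
    by (simp add: sum.distrib sum_subtractf sum_if_cond power2_eq_square algebra_simps)
qed

lemma sum_off_diag:
  fixes X :: "nat \<Rightarrow> nat \<Rightarrow> real"
  shows "(\<Sum>r<n. \<Sum>s<n. if r \<noteq> s then X r s else 0) = (\<Sum>r<n. \<Sum>s<n. X r s) - (\<Sum>r<n. X r r)"
proof -
  have "\<And>r. r < n \<Longrightarrow> (\<Sum>s<n. if r \<noteq> s then X r s else 0) = (\<Sum>s<n. X r s) - X r r"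
  proof -
    fix r assume r: "r < n"
    have "(\<Sum>s<n. X r s) = (\<Sum>s<n. if r \<noteq> s then X r s else 0) + (\<Sum>s<n. if r = s then X r s else 0)"
      by (subst sum.distrib[symmetric]) (rule sum.cong, auto)
    also have "(\<Sum>s<n. if r = s then X r s else 0) = X r r" using r by (simp add: sum.delta)
    finally show "(\<Sum>s<n. if r \<noteq> s then X r s else 0) = (\<Sum>s<n. X r s) - X r r" by simp
  qed
  then show ?thesis by (simp add: sum_subtractf)
qed

lemma nested4_zero:
  fixes f :: "nat \<Rightarrow> nat \<Rightarrow> nat \<Rightarrow> nat \<Rightarrow> real"
  assumes "\<And>a b c d. a<n \<Longrightarrow> b<n \<Longrightarrow> c<n \<Longrightarrow> d<n \<Longrightarrow> f a b c d \<ge> 0"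
  shows "(\<Sum>a<n. \<Sum>b<n. \<Sum>c<n. \<Sum>d<n. f a b c d) = 0 \<longleftrightarrow> (\<forall>a<n. \<forall>b<n. \<forall>c<n. \<forall>d<n. f a b c d = 0)"
proof -
  have nn3: "\<And>a. a<n \<Longrightarrow> (\<Sum>b<n. \<Sum>c<n. \<Sum>d<n. f a b c d) \<ge> 0"
    using assms by (intro sum_nonneg) auto
  have nn2: "\<And>a b. a<n \<Longrightarrow> b<n \<Longrightarrow> (\<Sum>c<n. \<Sum>d<n. f a b c d) \<ge> 0"
    using assms by (intro sum_nonneg) auto
  have nn1: "\<And>a b c. a<n \<Longrightarrow> b<n \<Longrightarrow> c<n \<Longrightarrow> (\<Sum>d<n. f a b c d) \<ge> 0"
    using assms by (intro sum_nonneg) auto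
  have z: "\<And>(h::nat\<Rightarrow>real). (\<And>x. x<n \<Longrightarrow> h x \<ge> 0) \<Longrightarrow> (sum h {..<n} = 0) = (\<forall>x<n. h x = 0)"
    by (subst sum_nonneg_eq_0_iff) auto
  have "(\<Sum>a<n. \<Sum>b<n. \<Sum>c<n. \<Sum>d<n. f a b c d) = 0 \<longleftrightarrow> (\<forall>a<n. (\<Sum>b<n. \<Sum>c<n. \<Sum>d<n. f a b c d) = 0)"
    using nn3 by (rule z)
  also have "\<dots> \<longleftrightarrow> (\<forall>a<n. \<forall>b<n. (\<Sum>c<n. \<Sum>d<n. f a b c d) = 0)"
  proof -
    have e: "\<And>a. a<n \<Longrightarrow> ((\<Sum>b<n. \<Sum>c<n. \<Sum>d<n. f a b c d) = 0) = (\<forall>b<n. (\<Sum>c<n. \<Sum>d<n. f a b c d) = 0)"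
      using nn2 by (intro z) auto
    show ?thesis using e by simp
  qed
  also have "\<dots> \<longleftrightarrow> (\<forall>a<n. \<forall>b<n. \<forall>c<n. (\<Sum>d<n. f a b c d) = 0)"
  proof -
    have e: "\<And>a b. a<n \<Longrightarrow> b<n \<Longrightarrow> ((\<Sum>c<n. \<Sum>d<n. f a b c d) = 0) = (\<forall>c<n. (\<Sum>d<n. f a b c d) = 0)"
      using nn1 by (intro z) auto
    show ?thesis using e by simp
  qed
  also have "\<dots> \<longleftrightarrow> (\<forall>a<n. \<forall>b<n. \<forall>c<n. \<forall>d<n. f a b c d = 0)"
  proof -
    have e: "\<And>a b c. a<n \<Longrightarrow> b<n \<Longrightarrow> c<n \<Longrightarrow> ((\<Sum>d<n. f a b c d) = 0) = (\<forall>d<n. f a b c d = 0)"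
      using assms by (intro z) auto
    show ?thesis using e by simp
  qed
  finally show ?thesis .
qed

lemma key_real:
  fixes w :: "nat\<Rightarrow>nat\<Rightarrow>nat\<Rightarrow>nat\<Rightarrow>real" and g :: "nat\<Rightarrow>nat\<Rightarrow>nat\<Rightarrow>nat\<Rightarrow>real" and N :: real
  assumes N: "N = real n"
  and S2: "\<And>r s. r<n \<Longrightarrow> s<n \<Longrightarrow> (\<Sum>k<n. \<Sum>l<n. w r s k l) = N^3"
  and S4: "(\<Sum>r<n. \<Sum>s<n. \<Sum>k<n. \<Sum>l<n. (w r s k l)^2) = (\<Sum>u'<n. \<Sum>t'<n. \<Sum>u<n. \<Sum>t<n. g u' t' u t)"
  and D: "\<And>r k l. r<n \<Longrightarrow> k<n \<Longrightarrow> l<n \<Longrightarrow> w r r k l = (if k = l then N^2 else 0)"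
  and gnn: "\<And>u' t' u t. u'<n \<Longrightarrow> t'<n \<Longrightarrow> u<n \<Longrightarrow> t<n \<Longrightarrow> g u' t' u t \<ge> 0"
  and gd: "\<And>u' t' u t. u'<n \<Longrightarrow> t'<n \<Longrightarrow> u<n \<Longrightarrow> t<n \<Longrightarrow> diag4 u' t' u t \<Longrightarrow> g u' t' u t = N^4"
  shows "(\<forall>r<n. \<forall>s<n. \<forall>k<n. \<forall>l<n. r\<noteq>s \<longrightarrow> w r s k l = N) \<longleftrightarrow>
         (\<forall>u'<n. \<forall>t'<n. \<forall>u<n. \<forall>t<n. \<not>(diag4 u' t' u t) \<longrightarrow> g u' t' u t = 0)"
proof -
  define E where "E r s k l = (if r \<noteq> s then (w r s k l - N)^2 else 0)" for r s k l
  define F where "F u' t' u t = g u' t' u t - (if diag4 u' t' u t then N^4 else 0)" for u' t' u t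
  define S where "S r s = (\<Sum>k<n. \<Sum>l<n. (w r s k l)^2)" for r s
  have E1: "(\<Sum>k<n. \<Sum>l<n. E r s k l) = (if r \<noteq> s then S r s - N^4 else 0)" if "r<n" "s<n" for r s
  proof (cases "r = s")
    case False
    have "(\<Sum>k<n. \<Sum>l<n. E r s k l) = (\<Sum>k<n. \<Sum>l<n. (w r s k l)^2 - 2 * N * w r s k l + N^2)"
      using False unfolding E_def by (simp add: power2_diff algebra_simps)
    also have "\<dots> = S r s - 2 * N * (\<Sum>k<n. \<Sum>l<n. w r s k l) + N^4"
      unfolding S_def by (simp add: sum.distrib sum_subtractf sum_distrib_left N power2_eq_square power4_eq_xxxx)
    also have "\<dots> = S r s - N^4" using S2[OF that] by (simp add: power2_eq_square power4_eq_xxxx power3_eq_cube)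
    finally show ?thesis using False by simp
  qed (simp add: E_def)
  have Srr: "S r r = N^5" if "r<n" for r
  proof -
    have "S r r = (\<Sum>k<n. \<Sum>l<n. if k = l then N^4 else 0)"
      unfolding S_def using that by (intro sum.cong refl) (auto simp: D power2_eq_square power4_eq_xxxx)
    also have "\<dots> = N^5" by (simp add: N sum.delta eval_nat_numeral)
    finally show ?thesis .
  qed
  have sumE: "(\<Sum>r<n. \<Sum>s<n. \<Sum>k<n. \<Sum>l<n. E r s k l) = (\<Sum>r<n. \<Sum>s<n. S r s) - 2*N^6 + N^5"
  proof -
    have "(\<Sum>r<n. \<Sum>s<n. \<Sum>k<n. \<Sum>l<n. E r s k l) = (\<Sum>r<n. \<Sum>s<n. if r \<noteq> s then S r s - N^4 else 0)"
      by (intro sum.cong refl) (simp add: E1)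
    also have "\<dots> = (\<Sum>r<n. \<Sum>s<n. S r s - N^4) - (\<Sum>r<n. S r r - N^4)"
      by (rule sum_off_diag)
    also have "\<dots> = (\<Sum>r<n. \<Sum>s<n. S r s) - N^2 * N^4 - (\<Sum>r<n. N^5 - N^4)"
      by (simp add: sum_subtractf Srr N power2_eq_square)
    also have "\<dots> = (\<Sum>r<n. \<Sum>s<n. S r s) - 2*N^6 + N^5"
      by (simp add: N algebra_simps eval_nat_numeral)
    finally show ?thesis .
  qed
  have sumF: "(\<Sum>u'<n. \<Sum>t'<n. \<Sum>u<n. \<Sum>t<n. F u' t' u t) = (\<Sum>u'<n. \<Sum>t'<n. \<Sum>u<n. \<Sum>t<n. g u' t' u t) - N^4 * (2 * N^2 - N)"
  proof -
    have "(\<Sum>u'<n. \<Sum>t'<n. \<Sum>u<n. \<Sum>t<n. (if diag4 u' t' u t then N^4 else 0))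
      = N^4 * (\<Sum>u'<n. \<Sum>t'<n. \<Sum>u<n. \<Sum>t<n. (if diag4 u' t' u t then 1 else 0))"
    proof -
      have m: "\<And>P. N^4 * (if P then 1 else 0) = (if P then N^4 else (0::real))" by simp
      show ?thesis by (simp add: sum_distrib_left m)
    qed
    also have "\<dots> = N^4 * (2 * N^2 - N)" using count_diag N by simp
    finally have c: "(\<Sum>u'<n. \<Sum>t'<n. \<Sum>u<n. \<Sum>t<n. (if diag4 u' t' u t then N^4 else 0)) = N^4 * (2 * N^2 - N)" .
    show ?thesis unfolding F_def by (simp add: sum_subtractf c)
  qed
  have eq: "(\<Sum>r<n. \<Sum>s<n. \<Sum>k<n. \<Sum>l<n. E r s k l) = (\<Sum>u'<n. \<Sum>t'<n. \<Sum>u<n. \<Sum>t<n. F u' t' u t)"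
    unfolding sumE sumF S4[symmetric] S_def by (simp add: algebra_simps eval_nat_numeral)
  have Enn: "\<And>a b c d. a<n \<Longrightarrow> b<n \<Longrightarrow> c<n \<Longrightarrow> d<n \<Longrightarrow> E a b c d \<ge> 0" unfolding E_def by simp
  have Fnn: "\<And>a b c d. a<n \<Longrightarrow> b<n \<Longrightarrow> c<n \<Longrightarrow> d<n \<Longrightarrow> F a b c d \<ge> 0" 
  proof -
    fix a b c d assume r: "a<n" "b<n" "c<n" "d<n"
    show "F a b c d \<ge> 0"
      using gnn[OF r] gd[OF r] unfolding F_def by (cases "diag4 a b c d") simp_all
  qed
  have Fz: "\<And>a b c d. a<n \<Longrightarrow> b<n \<Longrightarrow> c<n \<Longrightarrow> d<n \<Longrightarrow> (F a b c d = 0) \<longleftrightarrow> (\<not>(diag4 a b c d) \<longrightarrow> g a b c d = 0)"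
  proof -
    fix a b c d assume r: "a<n" "b<n" "c<n" "d<n"
    show "(F a b c d = 0) \<longleftrightarrow> (\<not>(diag4 a b c d) \<longrightarrow> g a b c d = 0)"
      using gd[OF r] unfolding F_def by (cases "diag4 a b c d") simp_all
  qed
  have "(\<forall>r<n. \<forall>s<n. \<forall>k<n. \<forall>l<n. r\<noteq>s \<longrightarrow> w r s k l = N) \<longleftrightarrow> (\<forall>a<n. \<forall>b<n. \<forall>c<n. \<forall>d<n. E a b c d = 0)"
    unfolding E_def by auto
  also have "\<dots> \<longleftrightarrow> (\<Sum>r<n. \<Sum>s<n. \<Sum>k<n. \<Sum>l<n. E r s k l) = 0" using nested4_zero[of n E] Enn by simp
  also have "\<dots> \<longleftrightarrow> (\<Sum>u'<n. \<Sum>t'<n. \<Sum>u<n. \<Sum>t<n. F u' t' u t) = 0" using eq by simp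
  also have "\<dots> \<longleftrightarrow> (\<forall>a<n. \<forall>b<n. \<forall>c<n. \<forall>d<n. F a b c d = 0)" using nested4_zero[of n F] Fnn by simp
  also have "\<dots> \<longleftrightarrow> (\<forall>u'<n. \<forall>t'<n. \<forall>u<n. \<forall>t<n. \<not>(diag4 u' t' u t) \<longrightarrow> g u' t' u t = 0)"
    by (simp add: Fz)
  finally show ?thesis .
qed




lemma unit_cnj: "cmod z = 1 \<Longrightarrow> cnj z * z = 1"
  by (metis complex_norm_square mult.commute of_real_1 power_one)

definition G4 :: "nat \<Rightarrow> (nat \<Rightarrow> nat \<Rightarrow> complex) \<Rightarrow> nat \<Rightarrow> nat \<Rightarrow> nat \<Rightarrow> nat \<Rightarrow> complex" where
  "G4 n f t u t' u' = (\<Sum>r<n. cnj (f t r) * f u r * cnj (f t' r) * f u' r)"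

lemma Xpart:
  "(\<Sum>p\<in>{..<n}\<times>{..<n}. (case p of (r,s) \<Rightarrow> cnj (f t r) * f t s) * cnj (case p of (r,s) \<Rightarrow> cnj (f u r) * f u s)
      * (case p of (r,s) \<Rightarrow> cnj (f t' r) * f t' s) * cnj (case p of (r,s) \<Rightarrow> cnj (f u' r) * f u' s))
   = G4 n f t u t' u' * cnj (G4 n f t u t' u')"
proof -
  have "G4 n f t u t' u' * cnj (G4 n f t u t' u') = (\<Sum>r<n. \<Sum>s<n. (cnj (f t r) * f u r * cnj (f t' r) * f u' r) * cnj (cnj (f t s) * f u s * cnj (f t' s) * f u' s))"
    unfolding G4_def cnj_sum by (rule sum_product)
  also have "\<dots> = (\<Sum>(r,s)\<in>{..<n}\<times>{..<n}. (cnj (f t r) * f u r * cnj (f t' r) * f u' r) * cnj (cnj (f t s) * f u s * cnj (f t' s) * f u' s))"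
    by (rule sum.cartesian_product)
  also have "\<dots> = (\<Sum>p\<in>{..<n}\<times>{..<n}. (case p of (r,s) \<Rightarrow> cnj (f t r) * f t s) * cnj (case p of (r,s) \<Rightarrow> cnj (f u r) * f u s)
      * (case p of (r,s) \<Rightarrow> cnj (f t' r) * f t' s) * cnj (case p of (r,s) \<Rightarrow> cnj (f u' r) * f u' s))"
    by (intro sum.cong refl) (auto simp: mult_ac)
  finally show ?thesis by simp
qed

lemma G4_swap1: "G4 n f t u t' u' = G4 n f t' u t u'"
  unfolding G4_def by (intro sum.cong refl) (simp add: mult_ac)
lemma G4_swap2: "G4 n f t u t' u' = G4 n f t u' t' u"
  unfolding G4_def by (intro sum.cong refl) (simp add: mult_ac)

lemma L_adj_G:
  assumes "C \<in> carrier_mat n n" "t < n" "t' < n" "u < n" "u' < n"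
  shows "L_adj C (t,t') (u,u') \<longleftrightarrow> (t,t') \<noteq> (u,u') \<and> G4 n (\<lambda>i j. C $$ (i,j)) t u t' u' = 0"
proof -
  have "cinner (entrywise_prod (row C t) (row C t')) (entrywise_prod (row C u) (row C u')) = G4 n (\<lambda>i j. C $$ (i,j)) t u t' u'"
    using assms unfolding cinner_def entrywise_prod_def G4_def
    by (auto intro!: sum.cong simp: mult_ac)
  then show ?thesis unfolding L_adj_def by simp
qed

lemma row_orth:
  fixes h :: "nat \<Rightarrow> nat \<Rightarrow> complex"
  assumes H: "H \<in> carrier_mat n n" and hdef: "\<And>i j. h i j = H $$ (i,j)"
    and H_flat: "\<forall>i<n. \<forall>j<n. cmod (H $$ (i,j)) = 1"
    and H_orth: "\<forall>i<n. \<forall>j<n. i \<noteq> j \<longrightarrow> cinner (row H i) (row H j) = 0"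
    and tu: "t < n" "u < n"
  shows "(\<Sum>k<n. cnj (h t k) * h u k) = (if t = u then of_nat n else 0)"
proof (cases "t = u")
  case True
  then show ?thesis using H_flat tu by (simp add: hdef unit_cnj)
next
  case False
  then have "cinner (row H t) (row H u) = 0" using H_orth tu by auto
  moreover have "(\<Sum>k<n. cnj (h t k) * h u k) = cinner (row H t) (row H u)"
    using H tu unfolding cinner_def by (auto simp: hdef intro!: sum.cong)
  ultimately show ?thesis using False by simp
qed

lemma col_orth:
  fixes h :: "nat \<Rightarrow> nat \<Rightarrow> complex"
  assumes H: "H \<in> carrier_mat n n" and hdef: "\<And>i j. h i j = H $$ (i,j)"
    and H_flat: "\<forall>i<n. \<forall>j<n. cmod (H $$ (i,j)) = 1"
    and H_orth: "\<forall>i<n. \<forall>j<n. i \<noteq> j \<longrightarrow> cinner (row H i) (row H j) = 0"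
    and n: "n > 0" and kl: "k < n" "l < n"
  shows "(\<Sum>t<n. cnj (h t k) * h t l) = (if k = l then of_nat n else 0)"
proof -
  note R = row_orth[OF H hdef H_flat H_orth]
  define B where "B = mat n n (\<lambda>(i,j). cnj (H $$ (j,i)) / of_nat n)"
  have B: "B \<in> carrier_mat n n" unfolding B_def by simp
  have HB: "H * B = 1\<^sub>m n"
  proof (rule eq_matI)
    fix i j assume ij: "i < dim_row (1\<^sub>m n)" "j < dim_col (1\<^sub>m n)"
    then have ij': "i < n" "j < n" by auto
    have "(H * B) $$ (i,j) = (\<Sum>x<n. H $$ (i,x) * (cnj (H $$ (j,x)) / of_nat n))"
      using H ij' unfolding B_def by (auto simp: scalar_prod_def lessThan_atLeast0 intro!: sum.cong)
    also have "\<dots> = (\<Sum>x<n. cnj (h j x) * h i x) / of_nat n"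
      by (simp add: sum_divide_distrib hdef mult_ac)
    also have "\<dots> = 1\<^sub>m n $$ (i,j)" using R[OF ij'(2) ij'(1)] ij' n by auto
    finally show "(H * B) $$ (i,j) = 1\<^sub>m n $$ (i,j)" .
  qed (use H B in auto)
  have BH: "B * H = 1\<^sub>m n" by (rule mat_mult_left_right_inverse[OF H B HB])
  have "(\<Sum>t<n. cnj (h t k) * h t l) / of_nat n = (B * H) $$ (k,l)"
    using H kl unfolding B_def by (auto simp: scalar_prod_def lessThan_atLeast0 hdef sum_divide_distrib intro!: sum.cong)
  also have "\<dots> = (if k = l then 1 else 0)" using BH kl by simp
  finally show ?thesis using n by (auto simp: divide_eq_eq split: if_splits)
qed




lemma mub_real:
  fixes x N :: real
  assumes "x \<ge> 0" "N > 0"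
  shows "(x / N = 1 / sqrt N) \<longleftrightarrow> (x^2 = N)"
proof -
  have sN: "sqrt N > 0" using assms by simp
  have "(x / N = 1 / sqrt N) \<longleftrightarrow> x = N / sqrt N" using assms sN by (auto simp: field_simps)
  also have "N / sqrt N = sqrt N" using assms by (simp add: real_div_sqrt)
  also have "x = sqrt N \<longleftrightarrow> x^2 = N" using assms by (auto intro: real_sqrt_unique)
  finally show ?thesis .
qed

lemma adj_mult_index:
  fixes M :: "complex mat"
  assumes "M \<in> carrier_mat n n" "k < n" "l < n"
  shows "(mat_adjoint M * M) $$ (k,l) = (\<Sum>t<n. cnj (M $$ (t,k)) * M $$ (t,l))"
  using assms unfolding mat_adjoint_def
  by (auto simp: scalar_prod_def lessThan_atLeast0 mat_of_rows_index intro!: sum.cong)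

lemma Ypart2:
  "(\<Sum>p\<in>{..<n}\<times>{..<n}. (case p of (k,l) \<Rightarrow> cnj (f t k) * f t l) * cnj (case p of (k,l) \<Rightarrow> cnj (f u k) * f u l))
   = (\<Sum>k<n. cnj (f t k) * f u k) * cnj (\<Sum>k<n. cnj (f t k) * f u k)"
proof -
  have "(\<Sum>k<n. cnj (f t k) * f u k) * cnj (\<Sum>k<n. cnj (f t k) * f u k) = (\<Sum>k<n. \<Sum>l<n. (cnj (f t k) * f u k) * cnj (cnj (f t l) * f u l))"
    unfolding cnj_sum by (rule sum_product)
  also have "\<dots> = (\<Sum>(k,l)\<in>{..<n}\<times>{..<n}. (cnj (f t k) * f u k) * cnj (cnj (f t l) * f u l))"
    by (rule sum.cartesian_product)
  also have "\<dots> = (\<Sum>p\<in>{..<n}\<times>{..<n}. (case p of (k,l) \<Rightarrow> cnj (f t k) * f t l) * cnj (case p of (k,l) \<Rightarrow> cnj (f u k) * f u l))"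
    by (intro sum.cong refl) (auto simp: mult_ac)
  finally show ?thesis by simp
qed




theorem proposition7:
  fixes n :: nat and A H :: "complex mat"
  assumes A: "A \<in> carrier_mat n n" and A_flat: "flat_mat A"
    and H: "H \<in> carrier_mat n n" and H_flat: "\<forall>i<n. \<forall>j<n. cmod (H $$ (i,j)) = 1"
    and H_orth: "\<forall>i<n. \<forall>j<n. i \<noteq> j \<longrightarrow> cinner (row H i) (row H j) = 0"
  shows "complete_MUH_system n
           ((\<lambda>r. mat n n (\<lambda>(l,k). (1 / complex_of_real (sqrt (real n))) * A $$ (l,r) * H $$ (l,k))) ` {..<n})
         \<longleftrightarrow> (\<forall>u\<in>Lverts n. \<forall>v\<in>Lverts n. u \<noteq> v \<longrightarrow> L_adj A u v \<or> L_adj H u v)"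
proof (cases "n = 0")
  case True
  then show ?thesis by (simp add: complete_MUH_system_def Lverts_def)
next
  case False
  then have n: "n > 0" by simp
  define N where "N = real n"
  have Npos: "N > 0" using n N_def by simp
  define a where "a = (\<lambda>i j. A $$ (i,j))"
  define h where "h = (\<lambda>i j. H $$ (i,j))"
  have A_un: "\<And>i j. i < n \<Longrightarrow> j < n \<Longrightarrow> cmod (a i j) = 1"
    using A_flat A unfolding flat_mat_def a_def by auto
  have H_un: "\<And>i j. i < n \<Longrightarrow> j < n \<Longrightarrow> cmod (h i j) = 1"
    using H_flat unfolding h_def by auto
  have a1: "\<And>i j. i < n \<Longrightarrow> j < n \<Longrightarrow> cnj (a i j) * a i j = 1" using A_un unit_cnj by blast
  have h1: "\<And>i j. i < n \<Longrightarrow> j < n \<Longrightarrow> cnj (h i j) * h i j = 1" using H_un unit_cnj by blast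
  have R: "\<And>t u. t < n \<Longrightarrow> u < n \<Longrightarrow> (\<Sum>k<n. cnj (h t k) * h u k) = (if t = u then of_nat n else 0)"
    by (rule row_orth[OF H _ H_flat H_orth]) (simp_all add: h_def)
  have CO: "\<And>k l. k < n \<Longrightarrow> l < n \<Longrightarrow> (\<Sum>t<n. cnj (h t k) * h t l) = (if k = l then of_nat n else 0)"
    by (rule col_orth[OF H _ H_flat H_orth n]) (simp_all add: h_def)
  define c :: complex where "c = 1 / complex_of_real (sqrt (real n))"
  have cc: "cnj c * c = 1 / of_nat n"
  proof -
    have "c = complex_of_real (1 / sqrt (real n))" unfolding c_def by simp
    then have "cnj c * c = complex_of_real (1 / sqrt (real n) * (1 / sqrt (real n)))" by (simp only: complex_cnj_complex_of_real of_real_mult)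
    also have "1 / sqrt (real n) * (1 / sqrt (real n)) = 1 / real n" by (simp add: field_simps)
    finally have "cnj c * c = complex_of_real (1 / real n)" .
    then show ?thesis by (metis of_real_divide of_real_1 of_real_of_nat_eq)
  qed
  have cmodc: "cmod c = 1 / sqrt (real n)" unfolding c_def by (simp add: norm_divide)
  define M where "M r = mat n n (\<lambda>(l,k). c * A $$ (l,r) * H $$ (l,k))" for r
  have img: "(\<lambda>r. mat n n (\<lambda>(l,k). (1 / complex_of_real (sqrt (real n))) * A $$ (l,r) * H $$ (l,k))) = M"
    unfolding M_def c_def by simp
  define X where "X = (\<lambda>p t. case p of (r,s) \<Rightarrow> cnj (a t r) * a t s)"
  define Y where "Y = (\<lambda>q t. case q of (k,l) \<Rightarrow> cnj (h t k) * h t l)"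
  define Cf where "Cf r s k l = (\<Sum>t<n. X (r,s) t * Y (k,l) t)" for r s k l
  define w where "w r s k l = (cmod (Cf r s k l))^2" for r s k l
  have wc: "complex_of_real (w r s k l) = Cf r s k l * cnj (Cf r s k l)" for r s k l
    unfolding w_def by (rule complex_norm_square)
  define gg where "gg u' t' u t = (cmod (G4 n a t u t' u'))^2 * (cmod (G4 n h t u t' u'))^2" for u' t' u t

  have F1: "cinner (col (M r) k) (col (M s) l) = Cf r s k l / of_nat n" if "k < n" "l < n" for r s k l
  proof -
    have "cinner (col (M r) k) (col (M s) l) = (\<Sum>t<n. cnj (c * a t r * h t k) * (c * a t s * h t l))"
      using that unfolding cinner_def M_def a_def h_def by (auto intro!: sum.cong)
    also have "\<dots> = (cnj c * c) * Cf r s k l"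
      unfolding Cf_def X_def Y_def sum_distrib_left by (intro sum.cong refl) (simp add: mult_ac)
    finally show ?thesis using cc by simp
  qed
  have F2: "mutually_unbiased n (M r) (M s) \<longleftrightarrow> (\<forall>k<n. \<forall>l<n. w r s k l = N)" for r s
  proof -
    have "\<And>k l. k < n \<Longrightarrow> l < n \<Longrightarrow> (cmod (cinner (col (M r) k) (col (M s) l)) = 1 / sqrt (real n)) \<longleftrightarrow> w r s k l = N"
    proof -
      fix k l assume kl: "k < n" "l < n"
      have "cmod (cinner (col (M r) k) (col (M s) l)) = cmod (Cf r s k l) / N"
        using F1[OF kl] by (simp add: norm_divide N_def)
      then show "(cmod (cinner (col (M r) k) (col (M s) l)) = 1 / sqrt (real n)) \<longleftrightarrow> w r s k l = N"
        using mub_real[of "cmod (Cf r s k l)" N] Npos unfolding w_def N_def by simp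
    qed
    then show ?thesis unfolding mutually_unbiased_def by simp
  qed
  have F3: "complex_hadamard n (M r)" if r: "r < n" for r
  proof -
    have car: "M r \<in> carrier_mat n n" unfolding M_def by simp
    have ent: "\<forall>i<n. \<forall>j<n. cmod (M r $$ (i,j)) = 1 / sqrt (real n)"
      using A_un H_un r cmodc unfolding M_def a_def h_def by (auto simp: norm_mult)
    have un: "mat_adjoint (M r) * M r = 1\<^sub>m n"
    proof (rule eq_matI)
      fix k l assume kl: "k < dim_row (1\<^sub>m n)" "l < dim_col (1\<^sub>m n)"
      then have kl': "k < n" "l < n" by auto
      have "(mat_adjoint (M r) * M r) $$ (k,l) = (\<Sum>t<n. cnj (M r $$ (t,k)) * M r $$ (t,l))"
        by (rule adj_mult_index[OF car kl'])
      also have "\<dots> = (\<Sum>t<n. (cnj c * c) * (cnj (a t r) * a t r) * (cnj (h t k) * h t l))"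
        using kl' unfolding M_def a_def h_def by (intro sum.cong refl) (auto simp: mult_ac)
      also have "\<dots> = (cnj c * c) * (\<Sum>t<n. cnj (h t k) * h t l)"
        using r by (simp add: a1 sum_distrib_left)
      also have "\<dots> = 1\<^sub>m n $$ (k,l)" using CO[OF kl'] cc kl' n by auto
      finally show "(mat_adjoint (M r) * M r) $$ (k,l) = 1\<^sub>m n $$ (k,l)" .
    next
      show "dim_row (mat_adjoint (M r) * M r) = dim_row (1\<^sub>m n)"
        using car unfolding mat_adjoint_def by simp
      show "dim_col (mat_adjoint (M r) * M r) = dim_col (1\<^sub>m n)"
        using car by simp
    qed
    show ?thesis unfolding complex_hadamard_def using car ent un by simp
  qed
  have F4: "(\<Sum>k<n. \<Sum>l<n. w r s k l) = N^3" if rs: "r < n" "s < n" for r s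
  proof -
    have "(\<Sum>q\<in>{..<n}\<times>{..<n}. (\<Sum>t<n. X (r,s) t * Y q t) * cnj (\<Sum>t<n. X (r,s) t * Y q t))
       = (\<Sum>u<n. \<Sum>t<n. (X (r,s) t * cnj (X (r,s) u)) * (\<Sum>q\<in>{..<n}\<times>{..<n}. Y q t * cnj (Y q u)))"
      by (rule two_moment)
    also have "\<dots> = (\<Sum>u<n. \<Sum>t<n. (X (r,s) t * cnj (X (r,s) u)) * (if t = u then of_nat n ^ 2 else 0))"
    proof (intro sum.cong refl)
      fix u t assume ut: "u \<in> {..<n}" "t \<in> {..<n}"
      have "(\<Sum>q\<in>{..<n}\<times>{..<n}. Y q t * cnj (Y q u)) = (\<Sum>k<n. cnj (h t k) * h u k) * cnj (\<Sum>k<n. cnj (h t k) * h u k)"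
        unfolding Y_def by (rule Ypart2)
      also have "\<dots> = (if t = u then of_nat n ^ 2 else 0)" using R ut by (simp add: power2_eq_square)
      finally show "X (r,s) t * cnj (X (r,s) u) * (\<Sum>q\<in>{..<n}\<times>{..<n}. Y q t * cnj (Y q u)) =
          X (r,s) t * cnj (X (r,s) u) * (if t = u then of_nat n ^ 2 else 0)" by simp
    qed
    also have "\<dots> = (\<Sum>u<n. of_nat n ^ 2)"
    proof (intro sum.cong refl)
      fix u assume u: "u \<in> {..<n}"
      have "X (r,s) u * cnj (X (r,s) u) = (cnj (a u r) * a u r) * (cnj (a u s) * a u s)"
        unfolding X_def by (simp add: mult_ac)
      also have "\<dots> = 1" using a1[of u r] a1[of u s] u rs by simp
      finally have "X (r,s) u * cnj (X (r,s) u) = 1" .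
      then show "(\<Sum>t<n. X (r,s) t * cnj (X (r,s) u) * (if t = u then of_nat n ^ 2 else 0)) = of_nat n ^ 2"
        using u by (simp add: if_distrib[of "\<lambda>x. _ * x"] sum.delta cong: if_cong)
    qed
    also have "\<dots> = complex_of_real (N^3)" by (simp add: N_def power2_eq_square power3_eq_cube)
    finally have e: "(\<Sum>q\<in>{..<n}\<times>{..<n}. (\<Sum>t<n. X (r,s) t * Y q t) * cnj (\<Sum>t<n. X (r,s) t * Y q t)) = complex_of_real (N^3)" .
    have "(\<Sum>q\<in>{..<n}\<times>{..<n}. (\<Sum>t<n. X (r,s) t * Y q t) * cnj (\<Sum>t<n. X (r,s) t * Y q t))
       = (\<Sum>k<n. \<Sum>l<n. Cf r s k l * cnj (Cf r s k l))"
      unfolding Cf_def by (rule sum.cartesian_product')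
    also have "\<dots> = complex_of_real (\<Sum>k<n. \<Sum>l<n. w r s k l)"
      by (simp only: of_real_sum wc)
    finally show ?thesis using e by (simp only: of_real_eq_iff)
  qed
  define Z where "Z p q = (\<Sum>t<n. X p t * Y q t)" for p q
  have F5: "(\<Sum>r<n. \<Sum>s<n. \<Sum>k<n. \<Sum>l<n. (w r s k l)^2) = (\<Sum>u'<n. \<Sum>t'<n. \<Sum>u<n. \<Sum>t<n. gg u' t' u t)"
  proof -
    have "complex_of_real (\<Sum>r<n. \<Sum>s<n. \<Sum>k<n. \<Sum>l<n. (w r s k l)^2)
       = (\<Sum>r<n. \<Sum>s<n. \<Sum>k<n. \<Sum>l<n. (Z (r,s) (k,l) * cnj (Z (r,s) (k,l)))^2)"
    proof -
      have CZ: "Cf r s k l = Z (r,s) (k,l)" for r s k l unfolding Cf_def Z_def by simp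
      show ?thesis by (simp only: of_real_sum of_real_power wc CZ)
    qed
    also have "\<dots> = (\<Sum>p\<in>{..<n}\<times>{..<n}. \<Sum>q\<in>{..<n}\<times>{..<n}. (Z p q * cnj (Z p q))^2)"
      by (simp only: sum.cartesian_product')
    also have "\<dots> = (\<Sum>u'<n. \<Sum>t'<n. \<Sum>u<n. \<Sum>t<n. (\<Sum>p\<in>{..<n}\<times>{..<n}. X p t * cnj (X p u) * X p t' * cnj (X p u')) *
        (\<Sum>q\<in>{..<n}\<times>{..<n}. Y q t * cnj (Y q u) * Y q t' * cnj (Y q u')))"
      unfolding Z_def by (rule four_moment)
    also have "\<dots> = (\<Sum>u'<n. \<Sum>t'<n. \<Sum>u<n. \<Sum>t<n. complex_of_real (gg u' t' u t))"
    proof (intro sum.cong refl)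
      fix u' t' u t
      have "(\<Sum>p\<in>{..<n}\<times>{..<n}. X p t * cnj (X p u) * X p t' * cnj (X p u')) = G4 n a t u t' u' * cnj (G4 n a t u t' u')"
        unfolding X_def by (rule Xpart)
      moreover have "(\<Sum>q\<in>{..<n}\<times>{..<n}. Y q t * cnj (Y q u) * Y q t' * cnj (Y q u')) = G4 n h t u t' u' * cnj (G4 n h t u t' u')"
        unfolding Y_def by (rule Xpart)
      ultimately show "(\<Sum>p\<in>{..<n}\<times>{..<n}. X p t * cnj (X p u) * X p t' * cnj (X p u')) *
        (\<Sum>q\<in>{..<n}\<times>{..<n}. Y q t * cnj (Y q u) * Y q t' * cnj (Y q u')) = complex_of_real (gg u' t' u t)"
        unfolding gg_def by (simp only: of_real_mult complex_norm_square)
    qed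
    also have "\<dots> = complex_of_real (\<Sum>u'<n. \<Sum>t'<n. \<Sum>u<n. \<Sum>t<n. gg u' t' u t)" by simp
    finally show ?thesis by (simp only: of_real_eq_iff)
  qed
  have F6: "w r r k l = (if k = l then N^2 else 0)" if "r < n" "k < n" "l < n" for r k l
  proof -
    have "Cf r r k l = (\<Sum>t<n. (cnj (a t r) * a t r) * (cnj (h t k) * h t l))"
      unfolding Cf_def X_def Y_def by simp
    also have "\<dots> = (\<Sum>t<n. cnj (h t k) * h t l)" using a1 that by simp
    also have "\<dots> = (if k = l then of_nat n else 0)" using CO that by simp
    finally show ?thesis unfolding w_def N_def by simp
  qed
  have gnn: "gg u' t' u t \<ge> 0" for u' t' u t unfolding gg_def by simp
  have Gd: "G4 n f t t t' t' = of_nat n" if f1: "\<And>i j. i < n \<Longrightarrow> j < n \<Longrightarrow> cnj (f i j) * f i j = 1"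
      and tt: "t < n" "t' < n" for f :: "nat \<Rightarrow> nat \<Rightarrow> complex" and t t'
  proof -
    have "G4 n f t t t' t' = (\<Sum>r<n. (cnj (f t r) * f t r) * (cnj (f t' r) * f t' r))"
      unfolding G4_def by (simp add: mult_ac)
    also have "\<dots> = (\<Sum>r<n. 1)" using f1 tt by simp
    finally show ?thesis by simp
  qed
  have gd: "gg u' t' u t = N^4" if r: "u'<n" "t'<n" "u<n" "t<n" and d: "diag4 u' t' u t" for u' t' u t
  proof -
    have e: "G4 n f t u t' u' = G4 n f t t t' t'" for f
      using d unfolding diag4_def by (metis G4_swap2)
    show ?thesis unfolding gg_def e using Gd[of a, OF a1] Gd[of h, OF h1] r
      by (simp add: N_def power_mult_distrib[symmetric] eval_nat_numeral)
  qed
  have KR: "(\<forall>r<n. \<forall>s<n. \<forall>k<n. \<forall>l<n. r\<noteq>s \<longrightarrow> w r s k l = N) \<longleftrightarrow>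
         (\<forall>u'<n. \<forall>t'<n. \<forall>u<n. \<forall>t<n. \<not>(diag4 u' t' u t) \<longrightarrow> gg u' t' u t = 0)"
    apply (rule key_real[of N n w gg])
    apply (fact N_def)
    apply (simp add: F4)
    apply (fact F5)
    apply (simp add: F6)
    apply (rule gnn)
    apply (simp add: gd)
    done
  have gg0: "gg u' t' u t = 0 \<longleftrightarrow> G4 n a t u t' u' = 0 \<or> G4 n h t u t' u' = 0" for u' t' u t
    unfolding gg_def by simp
  have LA: "L_adj A (t,t') (u,u') \<longleftrightarrow> (t,t') \<noteq> (u,u') \<and> G4 n a t u t' u' = 0"
    if "t<n" "t'<n" "u<n" "u'<n" for t t' u u'
    using L_adj_G[OF A that] unfolding a_def .
  have LH: "L_adj H (t,t') (u,u') \<longleftrightarrow> (t,t') \<noteq> (u,u') \<and> G4 n h t u t' u' = 0"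
    if "t<n" "t'<n" "u<n" "u'<n" for t t' u u'
    using L_adj_G[OF H that] unfolding h_def .
  have Gsort: "G4 n f (min t t') (min u u') (max t t') (max u u') = G4 n f t u t' u'" for f t t' u u'
    apply (cases "t \<le> t'"; cases "u \<le> u'")
    apply (simp_all add: min_def max_def)
    apply (metis G4_swap1 G4_swap2)+
    done
  have F8: "(\<forall>u\<in>Lverts n. \<forall>v\<in>Lverts n. u \<noteq> v \<longrightarrow> L_adj A u v \<or> L_adj H u v) \<longleftrightarrow>
         (\<forall>u'<n. \<forall>t'<n. \<forall>u<n. \<forall>t<n. \<not>(diag4 u' t' u t) \<longrightarrow> gg u' t' u t = 0)"
  proof
    assume cov: "\<forall>u\<in>Lverts n. \<forall>v\<in>Lverts n. u \<noteq> v \<longrightarrow> L_adj A u v \<or> L_adj H u v"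
    show "\<forall>u'<n. \<forall>t'<n. \<forall>u<n. \<forall>t<n. \<not>(diag4 u' t' u t) \<longrightarrow> gg u' t' u t = 0"
    proof (intro allI impI)
      fix u' t' u t assume r: "u'<n" "t'<n" "u<n" "t<n" and nd: "\<not> diag4 u' t' u t"
      define i where "i = min t t'"
      define j where "j = max t t'"
      define k where "k = min u u'"
      define l where "l = max u u'"
      have v1: "(i,j) \<in> Lverts n" and v2: "(k,l) \<in> Lverts n"
        using r unfolding Lverts_def i_def j_def k_def l_def by auto
      have ne: "(i,j) \<noteq> (k,l)"
        using nd unfolding diag4_def i_def j_def k_def l_def by (auto simp: min_def max_def split: if_splits)
      have ijkl: "i<n" "j<n" "k<n" "l<n" using v1 v2 unfolding Lverts_def by auto
      from cov v1 v2 ne have "L_adj A (i,j) (k,l) \<or> L_adj H (i,j) (k,l)" by blast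
      then have "G4 n a i k j l = 0 \<or> G4 n h i k j l = 0"
        using LA[OF ijkl] LH[OF ijkl] by blast
      then show "gg u' t' u t = 0" unfolding gg0 i_def j_def k_def l_def Gsort .
    qed
  next
    assume H8: "\<forall>u'<n. \<forall>t'<n. \<forall>u<n. \<forall>t<n. \<not>(diag4 u' t' u t) \<longrightarrow> gg u' t' u t = 0"
    show "\<forall>u\<in>Lverts n. \<forall>v\<in>Lverts n. u \<noteq> v \<longrightarrow> L_adj A u v \<or> L_adj H u v"
    proof (intro ballI impI)
      fix v1 v2 assume v1: "v1 \<in> Lverts n" and v2: "v2 \<in> Lverts n" and ne: "v1 \<noteq> v2"
      obtain i j where ij: "v1 = (i,j)" "i \<le> j" "j < n" using v1 unfolding Lverts_def by auto
      obtain k l where kl: "v2 = (k,l)" "k \<le> l" "l < n" using v2 unfolding Lverts_def by auto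
      have nd: "\<not> diag4 l j k i" using ij kl ne unfolding diag4_def by auto
      have "gg l j k i = 0" using H8 nd ij kl by auto
      then have "G4 n a i k j l = 0 \<or> G4 n h i k j l = 0" unfolding gg0 .
      then show "L_adj A v1 v2 \<or> L_adj H v1 v2"
        using LA[of i j k l] LH[of i j k l] ij kl ne by auto
    qed
  qed
  have noteq: "M r \<noteq> M s" if "r<n" "s<n" "r\<noteq>s" "mutually_unbiased n (M r) (M s)" for r s
  proof
    assume eq: "M r = M s"
    then have "mutually_unbiased n (M r) (M r)" using that by simp
    then have "w r r 0 0 = N" using F2 n by simp
    moreover have "w r r 0 0 = N^2" using F6[of r 0 0] that n by simp
    ultimately have "N = 1" using Npos by (simp add: power2_eq_square)
    then have "n = 1" unfolding N_def by simp
    then show False using that by simp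
  qed
  have F9: "complete_MUH_system n (M ` {..<n}) \<longleftrightarrow> (\<forall>r<n. \<forall>s<n. r\<noteq>s \<longrightarrow> mutually_unbiased n (M r) (M s))"
  proof
    assume L: "complete_MUH_system n (M ` {..<n})"
    then have "card (M ` {..<n}) = card {..<n}" unfolding complete_MUH_system_def by simp
    then have inj: "inj_on M {..<n}" by (simp add: inj_on_iff_eq_card)
    show "\<forall>r<n. \<forall>s<n. r\<noteq>s \<longrightarrow> mutually_unbiased n (M r) (M s)"
    proof (intro allI impI)
      fix r s assume "r<n" "s<n" "r\<noteq>s"
      then have "M r \<noteq> M s" using inj by (auto dest: inj_onD)
      then show "mutually_unbiased n (M r) (M s)" using L \<open>r<n\<close> \<open>s<n\<close> unfolding complete_MUH_system_def by auto
    qed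
  next
    assume R9: "\<forall>r<n. \<forall>s<n. r\<noteq>s \<longrightarrow> mutually_unbiased n (M r) (M s)"
    have inj: "inj_on M {..<n}"
    proof (rule inj_onI, rule ccontr)
      fix r s assume "r \<in> {..<n}" "s \<in> {..<n}" "M r = M s" "r \<noteq> s"
      then show False using noteq R9 by auto
    qed
    have "card (M ` {..<n}) = n" using inj by (simp add: card_image)
    moreover have "\<forall>X\<in>M ` {..<n}. complex_hadamard n X" using F3 by auto
    moreover have "\<forall>X\<in>M ` {..<n}. \<forall>X'\<in>M ` {..<n}. X \<noteq> X' \<longrightarrow> mutually_unbiased n X X'"
      using R9 by auto
    ultimately show "complete_MUH_system n (M ` {..<n})" unfolding complete_MUH_system_def by simp
  qed
  have F10: "(\<forall>r<n. \<forall>s<n. r\<noteq>s \<longrightarrow> mutually_unbiased n (M r) (M s)) \<longleftrightarrow>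
     (\<forall>r<n. \<forall>s<n. \<forall>k<n. \<forall>l<n. r\<noteq>s \<longrightarrow> w r s k l = N)"
    unfolding F2 by blast
  show ?thesis unfolding img F9 F10 KR F8 ..
qed


end
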